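(* Let $\bar w\in\mathbb{R}^{d_1}\setminus\{0\}$ and $\bar x\in\mathbb{R}^{d_2}\setminus\{0\}$. The set of points $(w,x)$ with $0\in\partial f_P(w,x)$ (limiting subdifferential) is exactly $$\mathcal{S}\cup\{0\}\cup\{(w,x):\langle w,\bar w\rangle=0,\ \langle x,\bar x\rangle=0,\ wx^\top=0\},$$ where $\mathcal{S}=\{(\alpha\bar w,\bar x/\alpha):\alpha\in\mathbb{R}\setminus\{0\}\}$.
   Context: The population objective is $f_P(w,x)=\mathbb{E}\,|a^\top(wx^\top-\bar w\bar x^\top)b|$ with $a\sim N(0,I_{d_1})$, $b\sim N(0,I_{d_2})$ independent. The limiting subdifferential $\partial h(\bar z)$ of a function $h$ is the set of $\xi$ for which there exist $z_n\to\bar z$ with $h(z_n)\to h(\bar z)$ and $\xi_n\to\xi$, where each $\xi_n$ is a Fréchet subgradient at $z_n$, i.e. $h(z)\ge h(z_n)+\langle\xi_n,z-z_n\rangle+o(\|z-z_n\|)$ as $z\to z_n$. *)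

theory Defs
  imports "HOL-Probability.Probability"
begin

definition std_gaussian :: "(real ^ 'n) measure" where
  "std_gaussian = density lborel
     (\<lambda>a. ennreal ((2 * pi) powr (- real CARD('n) / 2) * exp (- (norm a)\<^sup>2 / 2)))"

definition outer :: "real ^ 'n \<Rightarrow> real ^ 'm \<Rightarrow> real ^ 'm ^ 'n" where
  "outer w x = (\<chi> i j. w $ i * x $ j)"

definition fP :: "real ^ 'n \<Rightarrow> real ^ 'm \<Rightarrow> (real ^ 'n) \<times> (real ^ 'm) \<Rightarrow> real" where
  "fP wbar xbar z = (case z of (w, x) \<Rightarrow>
     integral\<^sup>L (std_gaussian \<Otimes>\<^sub>M std_gaussian)
       (\<lambda>(a, b). \<bar>a \<bullet> ((outer w x - outer wbar xbar) *v b)\<bar>))"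

definition frechet_subgrad :: "('a::real_inner \<Rightarrow> real) \<Rightarrow> 'a \<Rightarrow> 'a \<Rightarrow> bool" where
  "frechet_subgrad h z \<xi> \<longleftrightarrow>
     (\<forall>\<epsilon>>0. \<forall>\<^sub>F y in at z. h y \<ge> h z + \<xi> \<bullet> (y - z) - \<epsilon> * norm (y - z))"

definition limiting_subdiff :: "('a::real_inner \<Rightarrow> real) \<Rightarrow> 'a \<Rightarrow> 'a set" where
  "limiting_subdiff h z = {\<xi>. \<exists>zs \<xi>s. zs \<longlonglongrightarrow> z \<and> (\<lambda>n. h (zs n)) \<longlonglongrightarrow> h z \<and>
      \<xi>s \<longlonglongrightarrow> \<xi> \<and> (\<forall>n. frechet_subgrad h (zs n) (\<xi>s n))}"

end

theory Submission
  imports Defs "HOL-Analysis.Analysis"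
begin



definition lin_scal :: "(real^'n \<Rightarrow> real^'n) \<Rightarrow> bool" where
  "lin_scal f \<longleftrightarrow> (\<exists>m. \<forall>S \<in> lmeasurable. f ` S \<in> lmeasurable \<and> measure lebesgue (f ` S) = m * measure lebesgue S)"

lemma lin_scal_all:
  fixes f :: "real^'n \<Rightarrow> real^'n"
  assumes "linear f"
  shows "lin_scal f"
proof (rule induct_linear_elementary [OF \<open>linear f\<close>])
  fix f g :: "real^'n \<Rightarrow> real^'n"
  assume "linear f" "linear g" "lin_scal f" "lin_scal g"
  then obtain mf mg where f: "\<And>S. S \<in> lmeasurable \<Longrightarrow> f ` S \<in> lmeasurable \<and> measure lebesgue (f ` S) = mf * measure lebesgue S"
    and g: "\<And>S. S \<in> lmeasurable \<Longrightarrow> g ` S \<in> lmeasurable \<and> measure lebesgue (g ` S) = mg * measure lebesgue S"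
    unfolding lin_scal_def by metis
  show "lin_scal (f \<circ> g)" unfolding lin_scal_def
  proof (intro exI[of _ "mf*mg"] ballI conjI)
    fix S :: "(real^'n) set" assume S: "S \<in> lmeasurable"
    have e: "(f \<circ> g) ` S = f ` (g ` S)" by (simp add: image_comp)
    show "(f \<circ> g) ` S \<in> lmeasurable" unfolding e using f g S by blast
    show "measure lebesgue ((f \<circ> g) ` S) = mf * mg * measure lebesgue S" unfolding e using f g S by simp
  qed
next
  fix f :: "real^'n \<Rightarrow> real^'n" and i
  assume "linear f" and 0: "\<And>x. f x $ i = 0"
  then have "\<not> inj f"
    by (metis (full_types) linear_injective_imp_surjective one_neq_zero surjE vec_component)
  show "lin_scal f" unfolding lin_scal_def
  proof (intro exI[of _ 0] ballI conjI)
    fix S :: "(real^'n) set" assume "S \<in> lmeasurable"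
    show "f ` S \<in> lmeasurable"
      using lmeasurable_iff_indicator_has_integral \<open>linear f\<close> \<open>\<not> inj f\<close> negligible_UNIV negligible_linear_singular_image by blast
    show "measure lebesgue (f ` S) = 0 * measure lebesgue S"
      by (simp add: \<open>\<not> inj f\<close> \<open>linear f\<close> negligible_imp_measure0 negligible_linear_singular_image)
  qed
next
  fix c :: "'n \<Rightarrow> real"
  show "lin_scal (\<lambda>x. \<chi> i. c i * x $ i)" unfolding lin_scal_def
    by (rule exI[of _ "\<bar>prod c UNIV\<bar>"]) (simp add: measurable_stretch measure_stretch)
next
  fix m n :: 'n
  assume "m \<noteq> n"
  let ?h = "\<lambda>v::(real, 'n) vec. \<chi> i. v $ Transposition.transpose m n i"
  have lin: "linear ?h"
    by (rule linearI) (simp_all add: plus_vec_def scaleR_vec_def)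
  have meq: "measure lebesgue (?h ` cbox a b) = 1 * measure lebesgue (cbox a b)" for a b
  proof (cases "cbox a b = {}")
    case True then show ?thesis
      by simp
  next
    case False
    then have him: "?h ` (cbox a b) \<noteq> {}"
      by blast
    have eq: "?h ` (cbox a b) = cbox (?h a) (?h b)"
      by (auto simp: image_iff lambda_swap_Galois mem_box_cart) (metis transpose_involutory)+
    show ?thesis
      using him prod.permute [OF permutes_swap_id, where S=UNIV and g="\<lambda>i. (b - a)$i", symmetric]
      by (simp add: eq content_cbox_cart False)
  qed
  show "lin_scal ?h" unfolding lin_scal_def
  proof (intro exI[of _ 1] ballI)
    fix S :: "(real^'n) set" assume "S \<in> lmeasurable"
    from measure_linear_sufficient[OF lin this meq]
    show "?h ` S \<in> lmeasurable \<and> measure lebesgue (?h ` S) = 1 * measure lebesgue S" by simp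
  qed
next
  fix m n :: 'n
  assume "m \<noteq> n"
  let ?h = "\<lambda>v::(real, 'n) vec. \<chi> i. if i = m then v $ m + v $ n else v $ i"
  have lin: "linear ?h"
    by (rule linearI) (auto simp: algebra_simps plus_vec_def scaleR_vec_def vec_eq_iff)
  have meq: "measure lebesgue (?h ` (cbox a b)) = 1 * measure lebesgue (cbox a b)" for a b
  proof (cases "cbox a b = {}")
    case True then show ?thesis by simp
  next
    case False
    then have ne: "(+) (\<chi> i. if i = n then - a $ n else 0) ` cbox a b \<noteq> {}"
      by auto
    let ?v = "\<chi> i. if i = n then - a $ n else 0"
    have "?h ` cbox a b
          = (+) (\<chi> i. if i = m \<or> i = n then a $ n else 0) ` ?h ` (+) ?v ` (cbox a b)"
      using \<open>m \<noteq> n\<close> unfolding image_comp o_def by (force simp: vec_eq_iff)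
    then have "measure lebesgue (?h ` (cbox a b))
             = measure lebesgue ((\<lambda>v. \<chi> i. if i = m then v $ m + v $ n else v $ i) `
                                 (+) ?v ` cbox a b)"
      by (rule ssubst) (rule measure_translation)
    also have "\<dots> = measure lebesgue ((\<lambda>v. \<chi> i. if i = m then v $ m + v $ n else v $ i) ` cbox (?v +a) (?v + b))"
      by (metis (no_types, lifting) cbox_translation)
    also have "\<dots> = measure lebesgue ((+) ?v ` cbox a b)"
      apply (subst measure_shear_interval)
      using \<open>m \<noteq> n\<close> ne apply auto
      apply (simp add: cbox_translation)
      by (metis cbox_borel cbox_translation measure_completion sets_lborel)
    also have "\<dots> = measure lebesgue (cbox a b)"
      by (rule measure_translation)
    finally show ?thesis by simp
  qed
  show "lin_scal ?h" unfolding lin_scal_def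
  proof (intro exI[of _ 1] ballI)
    fix S :: "(real^'n) set" assume "S \<in> lmeasurable"
    from measure_linear_sufficient[OF lin this meq]
    show "?h ` S \<in> lmeasurable \<and> measure lebesgue (?h ` S) = 1 * measure lebesgue S" by simp
  qed
qed

lemma orth_measure_image:
  fixes f :: "real^'n \<Rightarrow> real^'n"
  assumes f: "orthogonal_transformation f" and S: "S \<in> lmeasurable"
  shows "f ` S \<in> lmeasurable" "measure lebesgue (f ` S) = measure lebesgue S"
proof -
  obtain m where m: "\<And>S. S \<in> lmeasurable \<Longrightarrow> f ` S \<in> lmeasurable \<and> measure lebesgue (f ` S) = m * measure lebesgue S"
    using lin_scal_all[OF orthogonal_transformation_linear[OF f]] unfolding lin_scal_def by metis
  have "f ` cball 0 1 = cball 0 1"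
    using image_orthogonal_transformation_cball[OF f] by (simp add: orthogonal_transformation_linear[OF f] linear_0)
  moreover have "measure lebesgue (cball (0::real^'n) 1) > 0"
    by (simp add: content_cball_pos)
  ultimately have "m = 1" using m[of "cball 0 1"] by simp
  then show "f ` S \<in> lmeasurable" "measure lebesgue (f ` S) = measure lebesgue S" using m[OF S] by auto
qed




definition refl :: "real^'n \<Rightarrow> real^'n \<Rightarrow> real^'n" where
  "refl e a = a - (2 * (a \<bullet> e) / (e \<bullet> e)) *\<^sub>R e"

lemma linear_refl: "linear (refl e)"
  unfolding refl_def by (intro linearI) (auto simp: algebra_simps inner_add_left add_divide_distrib)

lemma refl_refl[simp]: "refl e (refl e a) = a"
proof (cases "e = 0")
  case True then show ?thesis by (simp add: refl_def)
next
  case False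
  then have "e \<bullet> e \<noteq> 0" by simp
  then show ?thesis unfolding refl_def
    by (simp add: inner_diff_left algebra_simps)
qed

lemma refl_inner_e[simp]: "refl e a \<bullet> e = - (a \<bullet> e)"
proof (cases "e = 0")
  case True then show ?thesis by (simp add: refl_def)
next
  case False
  then have "e \<bullet> e \<noteq> 0" by simp
  then show ?thesis unfolding refl_def by (simp add: inner_diff_left)
qed

lemma refl_inner_orth: "v \<bullet> e = 0 \<Longrightarrow> refl e a \<bullet> v = a \<bullet> v"
  unfolding refl_def by (metis inner_commute inner_diff_left inner_scaleR_left mult_zero_right diff_zero)

lemma refl_inner_refl: "refl e a \<bullet> refl e b = a \<bullet> b"
proof (cases "e = 0")
  case True then show ?thesis by (simp add: refl_def)
next
  case False
  then have "e \<bullet> e \<noteq> 0" by simp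
  then show ?thesis unfolding refl_def
    by (simp add: inner_diff_left inner_diff_right algebra_simps inner_commute)
qed

lemma norm_refl[simp]: "norm (refl e a) = norm a"
  by (simp add: norm_eq_sqrt_inner refl_inner_refl)

lemma orth_refl: "orthogonal_transformation (refl e)"
  unfolding orthogonal_transformation_def using linear_refl refl_inner_refl by blast

lemma refl_vimage: "refl e -` S = refl e ` S"
  by (auto simp: image_iff) (metis refl_refl)

lemma continuous_refl: "continuous_on UNIV (refl e)"
  using linear_refl[of e] by (simp add: linear_continuous_on linear_conv_bounded_linear)

lemma refl_measurable[measurable]: "refl e \<in> borel_measurable borel"
  by (intro borel_measurable_continuous_onI continuous_refl)

lemma distr_lborel_refl: "distr lborel borel (refl e) = (lborel :: (real^'n) measure)"
proof (rule lborel_eqI[symmetric])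
  fix l u :: "real^'n"
  assume lu: "\<And>b. b \<in> Basis \<Longrightarrow> l \<bullet> b \<le> u \<bullet> b"
  have ob: "open (refl e ` box l u)"
    unfolding refl_vimage[symmetric]
    by (rule continuous_open_vimage) (auto intro: continuous_on_imp_continuous_within continuous_refl)
  then have bor: "refl e ` box l u \<in> sets borel" by simp
  have lm: "box l u \<in> lmeasurable" by simp
  have "emeasure (distr lborel borel (refl e)) (box l u) = emeasure lborel (refl e ` box l u)"
    by (simp add: emeasure_distr refl_vimage[symmetric])
  also have "\<dots> = emeasure lebesgue (refl e ` box l u)"
    using bor by (simp add: emeasure_completion)
  also have "\<dots> = ennreal (measure lebesgue (refl e ` box l u))"
    using orth_measure_image(1)[OF orth_refl lm] by (simp add: emeasure_eq_measure2)
  also have "\<dots> = ennreal (measure lebesgue (box l u))"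
    using orth_measure_image(2)[OF orth_refl lm] by simp
  also have "\<dots> = emeasure lebesgue (box l u)"
    using lm by (simp add: emeasure_eq_measure2)
  also have "\<dots> = emeasure lborel (box l u)"
    by (simp add: emeasure_completion)
  also have "\<dots> = (\<Prod>b\<in>Basis. (u - l) \<bullet> b)" using lu by simp
  finally show "emeasure (distr lborel borel (refl e)) (box l u) = (\<Prod>b\<in>Basis. (u - l) \<bullet> b)" .
qed simp




definition gd :: "real^'n \<Rightarrow> real" where
  "gd a = (2 * pi) powr (- real CARD('n) / 2) * exp (- (norm a)\<^sup>2 / 2)"

lemma std_gaussian_gd: "std_gaussian = density lborel (\<lambda>a. ennreal (gd a))"
  by (simp add: std_gaussian_def gd_def)

lemma sets_std_gaussian[simp, measurable_cong]: "sets std_gaussian = sets borel"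
  by (simp add: std_gaussian_def)

lemma space_std_gaussian[simp]: "space std_gaussian = UNIV"
  by (simp add: std_gaussian_def)

lemma gd_pos: "gd a > 0"
  by (simp add: gd_def)

lemma gd_refl[simp]: "gd (refl e a) = gd a"
  by (simp add: gd_def)

lemma gd_measurable[measurable]: "gd \<in> borel_measurable borel"
  unfolding gd_def by measurable

lemma distr_std_gaussian_refl: "distr std_gaussian borel (refl e) = (std_gaussian :: (real^'n) measure)"
proof -
  have "(std_gaussian :: (real^'n) measure) = density (distr lborel borel (refl e)) (\<lambda>a. ennreal (gd a))"
    using distr_lborel_refl std_gaussian_gd by metis
  also have "\<dots> = distr (density lborel (\<lambda>a. ennreal (gd (refl e a)))) borel (refl e)"
    by (rule density_distr) auto
  also have "\<dots> = distr std_gaussian borel (refl e)" by (simp add: std_gaussian_gd)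
  finally show ?thesis by simp
qed

lemma one_sum_le_prod: "finite A \<Longrightarrow> (\<And>x. x \<in> A \<Longrightarrow> 0 \<le> f x) \<Longrightarrow> 1 + sum f A \<le> (\<Prod>x\<in>A. 1 + f x :: real)"
proof (induction A rule: finite_induct)
  case empty then show ?case by simp
next
  case (insert x F)
  have h: "1 + sum f F \<le> (\<Prod>x\<in>F. 1 + f x)" using insert by auto
  have fx: "0 \<le> f x" using insert by auto
  have s: "0 \<le> sum f F" using insert by (auto intro: sum_nonneg)
  have "1 + sum f (insert x F) = 1 + f x + sum f F" using insert by simp
  also have "\<dots> \<le> (1 + f x) * (1 + sum f F)" using fx s by (simp add: algebra_simps)
  also have "\<dots> \<le> (1 + f x) * (\<Prod>x\<in>F. 1 + f x)" using h fx by (intro mult_left_mono) auto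
  finally show ?case using insert by simp
qed

lemma snd_eq: "std_normal_density t = (2*pi) powr (- (1/2)) * exp (- t\<^sup>2 / 2)"
proof -
  have "(2*pi) powr (- (1/2)) = 1 / sqrt (2*pi)"
    by (simp add: powr_minus_divide powr_half_sqrt)
  then show ?thesis by (simp add: std_normal_density_def)
qed

lemma gd_prod: "gd (a :: real^'n) = (\<Prod>b\<in>Basis. std_normal_density (a \<bullet> b))"
proof -
  have cB: "card (Basis :: (real^'n) set) = CARD('n)" using DIM_cart[where 'a=real and 'b='n] by simp
  have n2: "(norm a)\<^sup>2 = (\<Sum>b\<in>Basis. (a \<bullet> b)\<^sup>2)"
    unfolding power2_norm_eq_inner by (subst euclidean_inner) (simp add: power2_eq_square)
  have "(\<Prod>b\<in>(Basis :: (real^'n) set). std_normal_density (a \<bullet> b))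
      = (\<Prod>b\<in>(Basis :: (real^'n) set). (2*pi) powr (- (1/2))) * (\<Prod>b\<in>Basis. exp (- (a \<bullet> b)\<^sup>2 / 2))"
    unfolding snd_eq by (rule prod.distrib)
  also have "(\<Prod>b\<in>(Basis :: (real^'n) set). (2*pi) powr (- (1/2))) = (2*pi) powr (- real CARD('n) / 2)"
    by (simp add: cB powr_power)
  also have "(\<Prod>b\<in>(Basis :: (real^'n) set). exp (- (a \<bullet> b)\<^sup>2 / 2)) = exp (- (norm a)\<^sup>2 / 2)"
    by (simp add: n2 exp_sum[symmetric] sum_divide_distrib sum_negf)
  finally show ?thesis by (simp add: gd_def)
qed

lemma gauss_moment_finite: "(\<integral>\<^sup>+a. ennreal (1 + norm a) \<partial>(std_gaussian :: (real^'n) measure)) < \<infinity>"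
proof -
  define F where "F t = std_normal_density t * (1 + \<bar>t\<bar>)" for t
  have intF: "integrable lborel F"
    unfolding F_def using integrable_std_normal_moment_abs[of 1] integrable_std_normal_moment_abs[of 0]
    by (simp add: distrib_left)
  have F0: "0 \<le> F t" for t unfolding F_def by simp
  have "(\<integral>\<^sup>+a. ennreal (1 + norm a) \<partial>(std_gaussian :: (real^'n) measure))
      = (\<integral>\<^sup>+a. ennreal (gd (a::real^'n)) * ennreal (1 + norm a) \<partial>lborel)"
    unfolding std_gaussian_gd by (subst nn_integral_density) auto
  also have "\<dots> \<le> (\<integral>\<^sup>+a. (\<Prod>b\<in>(Basis :: (real^'n) set). ennreal (F (a \<bullet> b))) \<partial>(lborel :: (real^'n) measure))"
  proof (intro nn_integral_mono)
    fix a :: "real^'n"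
    have "1 + norm a \<le> 1 + (\<Sum>b\<in>Basis. \<bar>a \<bullet> b\<bar>)" using norm_le_l1[of a] by simp
    also have "\<dots> \<le> (\<Prod>b\<in>Basis. 1 + \<bar>a \<bullet> b\<bar>)" by (rule one_sum_le_prod) auto
    finally have "gd a * (1 + norm a) \<le> gd a * (\<Prod>b\<in>Basis. 1 + \<bar>a \<bullet> b\<bar>)"
      using gd_pos[of a] by (intro mult_left_mono) auto
    also have "\<dots> = (\<Prod>b\<in>Basis. F (a \<bullet> b))"
      by (simp add: gd_prod F_def prod.distrib)
    finally have "gd a * (1 + norm a) \<le> (\<Prod>b\<in>Basis. F (a \<bullet> b))" .
    then have "ennreal (gd a * (1 + norm a)) \<le> ennreal (\<Prod>b\<in>Basis. F (a \<bullet> b))"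
      by (rule ennreal_leI)
    moreover have "ennreal (gd a * (1 + norm a)) = ennreal (gd a) * ennreal (1 + norm a)"
      using gd_pos[of a] by (intro ennreal_mult) auto
    moreover have "ennreal (\<Prod>b\<in>Basis. F (a \<bullet> b)) = (\<Prod>b\<in>Basis. ennreal (F (a \<bullet> b)))"
      using F0 by (intro prod_ennreal[symmetric]) auto
    ultimately show "ennreal (gd a) * ennreal (1 + norm a) \<le> (\<Prod>b\<in>Basis. ennreal (F (a \<bullet> b)))"
      by simp
  qed
  also have "\<dots> = (\<Prod>b\<in>(Basis :: (real^'n) set). (\<integral>\<^sup>+t. ennreal (F t) \<partial>lborel))"
    by (rule nn_integral_lborel_prod) (auto simp: F_def)
  also have "\<dots> = (\<Prod>b\<in>(Basis :: (real^'n) set). ennreal (integral\<^sup>L lborel F))"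
    using intF F0 by (simp add: nn_integral_eq_integral)
  also have "\<dots> < \<infinity>"
  proof -
    have "0 \<le> integral\<^sup>L lborel F" using F0 by (simp add: integral_nonneg)
    then show ?thesis by (simp add: ennreal_power)
  qed
  finally show ?thesis .
qed

lemma finite_measure_std_gaussian: "finite_measure (std_gaussian :: (real^'n) measure)"
proof
  have "emeasure (std_gaussian :: (real^'n) measure) (space std_gaussian) = (\<integral>\<^sup>+a. 1 \<partial>(std_gaussian :: (real^'n) measure))"
    by simp
  also have "\<dots> \<le> (\<integral>\<^sup>+a. ennreal (1 + norm a) \<partial>(std_gaussian :: (real^'n) measure))"
    by (intro nn_integral_mono) simp
  from le_less_trans[OF this gauss_moment_finite]
  show "emeasure (std_gaussian :: (real^'n) measure) (space std_gaussian) \<noteq> \<infinity>"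
    by simp
qed

interpretation SG: finite_measure "std_gaussian :: (real^'n) measure"
  by (rule finite_measure_std_gaussian)

lemma gauss_norm_finite: "(\<integral>\<^sup>+a. ennreal (norm a) \<partial>(std_gaussian :: (real^'n) measure)) < \<infinity>"
  apply (rule le_less_trans[OF _ gauss_moment_finite])
  apply (rule nn_integral_mono) apply (rule ennreal_leI) by simp

lemma integrable_prod_norms:
  "integrable ((std_gaussian :: (real^'n) measure) \<Otimes>\<^sub>M (std_gaussian :: (real^'m) measure)) (\<lambda>(a,b). norm a * norm b)"
proof (rule integrableI_bounded)
  show "(\<lambda>(a, b). norm a * norm b) \<in> borel_measurable ((std_gaussian :: (real^'n) measure) \<Otimes>\<^sub>M (std_gaussian :: (real^'m) measure))"
    by measurable
  have "(\<integral>\<^sup>+ z. ennreal (norm (case z of (a, b) \<Rightarrow> norm a * norm b)) \<partial>((std_gaussian :: (real^'n) measure) \<Otimes>\<^sub>M (std_gaussian :: (real^'m) measure)))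
    = (\<integral>\<^sup>+ a. \<integral>\<^sup>+ b. ennreal (norm a) * ennreal (norm b) \<partial>(std_gaussian :: (real^'m) measure) \<partial>(std_gaussian :: (real^'n) measure))"
    by (subst SG.nn_integral_fst[symmetric]) (auto simp: ennreal_mult)
  also have "\<dots> = (\<integral>\<^sup>+ a. ennreal (norm a) * (\<integral>\<^sup>+ b. ennreal (norm b) \<partial>(std_gaussian :: (real^'m) measure)) \<partial>(std_gaussian :: (real^'n) measure))"
    by (simp add: nn_integral_cmult)
  also have "\<dots> = (\<integral>\<^sup>+ a. ennreal (norm a) \<partial>(std_gaussian :: (real^'n) measure)) * (\<integral>\<^sup>+ b. ennreal (norm b) \<partial>(std_gaussian :: (real^'m) measure))"
    by (simp add: nn_integral_multc)
  also have "\<dots> < \<infinity>" using gauss_norm_finite[where 'n='n] gauss_norm_finite[where 'n='m]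
    by (simp add: ennreal_mult_less_top)
  finally show "(\<integral>\<^sup>+ z. ennreal (norm (case z of (a, b) \<Rightarrow> norm a * norm b)) \<partial>((std_gaussian :: (real^'n) measure) \<Otimes>\<^sub>M (std_gaussian :: (real^'m) measure))) < \<infinity>" .
qed




abbreviation PG :: "((real^'n) \<times> (real^'m)) measure" where
  "PG \<equiv> std_gaussian \<Otimes>\<^sub>M std_gaussian"

interpretation PSG: pair_sigma_finite "std_gaussian :: (real^'n) measure" "std_gaussian :: (real^'m) measure"
  by unfold_locales

lemma sets_PG: "sets (PG :: ((real^'n) \<times> (real^'m)) measure) = sets borel"
proof -
  have "sets (PG :: ((real^'n) \<times> (real^'m)) measure) = sets (borel \<Otimes>\<^sub>M borel)"
    by (rule sets_pair_measure_cong) simp_all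
  also have "\<dots> = sets borel" by (simp only: borel_prod)
  finally show ?thesis .
qed

lemma space_PG[simp]: "space (PG :: ((real^'n) \<times> (real^'m)) measure) = UNIV"
  by (simp add: space_pair_measure)

lemma outer_mult: "outer w x *v b = (x \<bullet> b) *\<^sub>R w"
  by (simp add: vec_eq_iff outer_def matrix_vector_mult_def inner_vec_def sum_distrib_left mult.commute mult.left_commute)

lemma bil: "a \<bullet> ((outer w x - outer wb xb) *v b) = (a \<bullet> w) * (x \<bullet> b) - (a \<bullet> wb) * (xb \<bullet> b)"
  by (simp add: matrix_vector_mult_diff_rdistrib outer_mult inner_diff_right)

definition Fz :: "real^'n \<Rightarrow> real^'m \<Rightarrow> real^'n \<Rightarrow> real^'m \<Rightarrow> real" where
  "Fz wb xb w x = integral\<^sup>L PG (\<lambda>(a,b). \<bar>(a \<bullet> w) * (x \<bullet> b) - (a \<bullet> wb) * (xb \<bullet> b)\<bar>)"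

lemma fP_Fz: "fP wb xb z = Fz wb xb (fst z) (snd z)"
  by (cases z) (simp add: fP_def Fz_def bil)

lemma integrable_dom:
  assumes "g \<in> borel_measurable (PG :: ((real^'n) \<times> (real^'m)) measure)"
    and "\<And>a b. \<bar>g (a,b)\<bar> \<le> C * (norm a * norm b)"
  shows "integrable (PG :: ((real^'n) \<times> (real^'m)) measure) g"
proof (rule Bochner_Integration.integrable_bound)
  show "integrable (PG :: ((real^'n) \<times> (real^'m)) measure) (\<lambda>z. C * (case z of (a,b) \<Rightarrow> norm a * norm b))"
    using integrable_prod_norms by (rule Bochner_Integration.integrable_mult_right)
  show "AE z in PG. norm (g z) \<le> norm (C * (case z of (a,b) \<Rightarrow> norm a * norm b))"
  proof (intro AE_I2)
    fix z :: "(real^'n) \<times> (real^'m)"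
    obtain a b where z: "z = (a,b)" by (cases z)
    have "\<bar>g (a,b)\<bar> \<le> C * (norm a * norm b)" by (rule assms(2))
    then show "norm (g z) \<le> norm (C * (case z of (a,b) \<Rightarrow> norm a * norm b))" using z by auto
  qed
qed (rule assms(1))

lemma bil_bound: "\<bar>(a \<bullet> p) * (q \<bullet> b)\<bar> \<le> (norm p * norm q) * (norm a * norm b)"
proof -
  have "\<bar>a \<bullet> p\<bar> \<le> norm a * norm p" by (rule Cauchy_Schwarz_ineq2)
  moreover have "\<bar>q \<bullet> b\<bar> \<le> norm q * norm b" by (rule Cauchy_Schwarz_ineq2)
  ultimately have "\<bar>a \<bullet> p\<bar> * \<bar>q \<bullet> b\<bar> \<le> (norm a * norm p) * (norm q * norm b)"
    by (intro mult_mono) auto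
  then show ?thesis by (simp add: abs_mult algebra_simps)
qed

lemma integrable_bil: "integrable (PG :: ((real^'n) \<times> (real^'m)) measure) (\<lambda>(a,b). (a \<bullet> p) * (q \<bullet> b))"
  by (rule integrable_dom[where C="norm p * norm q"]) (auto intro: bil_bound)

lemma integrable_Fz_int: "integrable (PG :: ((real^'n) \<times> (real^'m)) measure) (\<lambda>(a,b). \<bar>(a \<bullet> w) * (x \<bullet> b) - (a \<bullet> wb) * (xb \<bullet> b)\<bar>)"
proof (rule integrable_dom[where C="norm w * norm x + norm wb * norm xb"])
  fix a :: "real^'n" and b :: "real^'m"
  have "\<bar>\<bar>(a \<bullet> w) * (x \<bullet> b) - (a \<bullet> wb) * (xb \<bullet> b)\<bar>\<bar> \<le> \<bar>(a \<bullet> w) * (x \<bullet> b)\<bar> + \<bar>(a \<bullet> wb) * (xb \<bullet> b)\<bar>"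
    by simp
  also have "\<dots> \<le> (norm w * norm x) * (norm a * norm b) + (norm wb * norm xb) * (norm a * norm b)"
    by (intro add_mono bil_bound)
  finally show "\<bar>(case (a,b) of (a,b) \<Rightarrow> \<bar>(a \<bullet> w) * (x \<bullet> b) - (a \<bullet> wb) * (xb \<bullet> b)\<bar>)\<bar> \<le> (norm w * norm x + norm wb * norm xb) * (norm a * norm b)"
    by (simp add: algebra_simps)
qed measurable

lemma Fz_nonneg: "Fz wb xb w x \<ge> 0"
  unfolding Fz_def by (rule Bochner_Integration.integral_nonneg) (simp split: prod.split)

lemma abs_diff_abs_le: "\<bar>\<bar>A - V\<bar> - \<bar>B - V\<bar>\<bar> \<le> \<bar>A - (B::real)\<bar>"
  by arith

lemma Fz_diff_bound:
  fixes wb :: "real^'n" and xb :: "real^'m"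
  shows "\<bar>Fz wb xb w' x' - Fz wb xb w x\<bar> \<le> integral\<^sup>L (PG :: ((real^'n) \<times> (real^'m)) measure) (\<lambda>(a,b). norm a * norm b) * (norm (w'-w) * norm x' + norm w * norm (x'-x))"
proof -
  define c where "c = norm (w'-w) * norm x' + norm w * norm (x'-x)"
  have pw: "\<bar>\<bar>(a \<bullet> w') * (x' \<bullet> b) - (a \<bullet> wb) * (xb \<bullet> b)\<bar> - \<bar>(a \<bullet> w) * (x \<bullet> b) - (a \<bullet> wb) * (xb \<bullet> b)\<bar>\<bar> \<le> c * (norm a * norm b)"
    for a :: "real^'n" and b :: "real^'m"
  proof -
    have e: "(a \<bullet> w') * (x' \<bullet> b) - (a \<bullet> w) * (x \<bullet> b) = (a \<bullet> (w'-w)) * (x' \<bullet> b) + (a \<bullet> w) * ((x'-x) \<bullet> b)"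
      by (simp add: inner_diff_right inner_diff_left algebra_simps)
    have "\<bar>\<bar>(a \<bullet> w') * (x' \<bullet> b) - (a \<bullet> wb) * (xb \<bullet> b)\<bar> - \<bar>(a \<bullet> w) * (x \<bullet> b) - (a \<bullet> wb) * (xb \<bullet> b)\<bar>\<bar>
        \<le> \<bar>(a \<bullet> w') * (x' \<bullet> b) - (a \<bullet> w) * (x \<bullet> b)\<bar>" by (rule abs_diff_abs_le)
    also have "\<dots> \<le> \<bar>(a \<bullet> (w'-w)) * (x' \<bullet> b)\<bar> + \<bar>(a \<bullet> w) * ((x'-x) \<bullet> b)\<bar>"
      unfolding e by (rule abs_triangle_ineq)
    also have "\<dots> \<le> (norm (w'-w) * norm x') * (norm a * norm b) + (norm w * norm (x'-x)) * (norm a * norm b)"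
      by (intro add_mono bil_bound)
    finally show ?thesis by (simp add: c_def algebra_simps)
  qed
  let ?u' = "\<lambda>(a::real^'n,b::real^'m). \<bar>(a \<bullet> w') * (x' \<bullet> b) - (a \<bullet> wb) * (xb \<bullet> b)\<bar>"
  let ?u = "\<lambda>(a::real^'n,b::real^'m). \<bar>(a \<bullet> w) * (x \<bullet> b) - (a \<bullet> wb) * (xb \<bullet> b)\<bar>"
  have i1: "integrable PG ?u'" by (rule integrable_Fz_int)
  have i2: "integrable PG ?u" by (rule integrable_Fz_int)
  have "Fz wb xb w' x' - Fz wb xb w x = integral\<^sup>L PG (\<lambda>z. ?u' z - ?u z)"
    unfolding Fz_def by (rule Bochner_Integration.integral_diff[OF i1 i2, symmetric])
  also have "\<bar>\<dots>\<bar> \<le> integral\<^sup>L PG (\<lambda>z. \<bar>?u' z - ?u z\<bar>)"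
    using integral_norm_bound[of PG "\<lambda>z. ?u' z - ?u z"] by simp
  also have "\<dots> \<le> integral\<^sup>L PG (\<lambda>z::(real^'n) \<times> (real^'m). c * (case z of (a,b) \<Rightarrow> norm a * norm b))"
  proof (rule Bochner_Integration.integral_mono)
    show "integrable PG (\<lambda>z. \<bar>?u' z - ?u z\<bar>)" using i1 i2 by (intro integrable_abs Bochner_Integration.integrable_diff)
    show "integrable PG (\<lambda>z. c * (case z of (a,b) \<Rightarrow> norm a * norm b))"
      using integrable_prod_norms by (rule Bochner_Integration.integrable_mult_right)
    fix z :: "(real^'n) \<times> (real^'m)"
    show "\<bar>?u' z - ?u z\<bar> \<le> c * (case z of (a,b) \<Rightarrow> norm a * norm b)"
      using pw by (cases z) auto
  qed
  also have "\<dots> = integral\<^sup>L PG (\<lambda>(a::real^'n,b::real^'m). norm a * norm b) * c"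
    by (simp add: mult.commute)
  finally show ?thesis by (simp add: c_def)
qed

lemma isCont_fP:
  fixes wb :: "real^'n" and xb :: "real^'m"
  shows "isCont (fP wb xb) z"
proof -
  obtain w x where z: "z = (w,x)" by (cases z)
  define K where "K = integral\<^sup>L (PG :: ((real^'n) \<times> (real^'m)) measure) (\<lambda>(a,b). norm a * norm b)"
  let ?g = "\<lambda>y. K * (norm (fst y - w) * norm (snd y) + norm w * norm (snd y - x))"
  have g: "(?g \<longlongrightarrow> 0) (at z)"
  proof -
    have "(?g \<longlongrightarrow> K * (norm (fst z - w) * norm (snd z) + norm w * norm (snd z - x))) (at z)"
      by (intro tendsto_intros)
    then show ?thesis using z by simp
  qed
  have "((\<lambda>y. fP wb xb y - fP wb xb z) \<longlongrightarrow> 0) (at z)"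
  proof (rule Lim_null_comparison[OF _ g])
    show "\<forall>\<^sub>F y in at z. norm (fP wb xb y - fP wb xb z) \<le> ?g y"
      by (intro always_eventually allI) (simp add: fP_Fz z K_def Fz_diff_bound)
  qed
  then show ?thesis unfolding isCont_def by (simp add: LIM_zero_iff)
qed

lemma Fz_conv_x:
  fixes wb :: "real^'n" and xb :: "real^'m"
  assumes "0 \<le> t" "t \<le> 1"
  shows "Fz wb xb w (x + t *\<^sub>R d) \<le> (1 - t) * Fz wb xb w x + t * Fz wb xb w (x + d)"
proof -
  let ?u1 = "\<lambda>(a::real^'n,b::real^'m). \<bar>(a \<bullet> w) * (x \<bullet> b) - (a \<bullet> wb) * (xb \<bullet> b)\<bar>"
  let ?u2 = "\<lambda>(a::real^'n,b::real^'m). \<bar>(a \<bullet> w) * ((x + d) \<bullet> b) - (a \<bullet> wb) * (xb \<bullet> b)\<bar>"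
  have pw: "\<bar>(a \<bullet> w) * ((x + t *\<^sub>R d) \<bullet> b) - (a \<bullet> wb) * (xb \<bullet> b)\<bar>
     \<le> (1 - t) * \<bar>(a \<bullet> w) * (x \<bullet> b) - (a \<bullet> wb) * (xb \<bullet> b)\<bar> + t * \<bar>(a \<bullet> w) * ((x + d) \<bullet> b) - (a \<bullet> wb) * (xb \<bullet> b)\<bar>"
    for a :: "real^'n" and b :: "real^'m"
  proof -
    have e: "(a \<bullet> w) * ((x + t *\<^sub>R d) \<bullet> b) - (a \<bullet> wb) * (xb \<bullet> b)
       = (1 - t) * ((a \<bullet> w) * (x \<bullet> b) - (a \<bullet> wb) * (xb \<bullet> b)) + t * ((a \<bullet> w) * ((x + d) \<bullet> b) - (a \<bullet> wb) * (xb \<bullet> b))"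
      by (simp add: inner_add_left algebra_simps)
    show ?thesis unfolding e
      using abs_triangle_ineq[of "(1 - t) * ((a \<bullet> w) * (x \<bullet> b) - (a \<bullet> wb) * (xb \<bullet> b))" "t * ((a \<bullet> w) * ((x + d) \<bullet> b) - (a \<bullet> wb) * (xb \<bullet> b))"]
        assms by (simp add: abs_mult)
  qed
  have "Fz wb xb w (x + t *\<^sub>R d) \<le> integral\<^sup>L PG (\<lambda>z. (1 - t) * ?u1 z + t * ?u2 z)"
    unfolding Fz_def
  proof (rule Bochner_Integration.integral_mono)
    show "integrable PG (\<lambda>z. (1 - t) * ?u1 z + t * ?u2 z)"
      using integrable_Fz_int[of w x wb xb] integrable_Fz_int[of w "x+d" wb xb]
      by (intro Bochner_Integration.integrable_add Bochner_Integration.integrable_mult_right)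
    fix z :: "(real^'n) \<times> (real^'m)"
    show "(case z of (a,b) \<Rightarrow> \<bar>(a \<bullet> w) * ((x + t *\<^sub>R d) \<bullet> b) - (a \<bullet> wb) * (xb \<bullet> b)\<bar>) \<le> (1 - t) * ?u1 z + t * ?u2 z"
      using pw by (cases z) auto
  qed (rule integrable_Fz_int)
  also have "\<dots> = (1 - t) * Fz wb xb w x + t * Fz wb xb w (x + d)"
    unfolding Fz_def by (simp add: integrable_Fz_int Bochner_Integration.integral_add)
  finally show ?thesis .
qed

lemma Fz_swap:
  fixes wb :: "real^'n" and xb :: "real^'m"
  shows "Fz wb xb w x = Fz xb wb x w"
proof -
  let ?f = "\<lambda>(a::real^'n,b::real^'m). \<bar>(a \<bullet> w) * (x \<bullet> b) - (a \<bullet> wb) * (xb \<bullet> b)\<bar>"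
  have "Fz wb xb w x = integral\<^sup>L (distr (PG :: ((real^'m) \<times> (real^'n)) measure) (PG :: ((real^'n) \<times> (real^'m)) measure) (\<lambda>(x,y). (y,x))) ?f"
    unfolding Fz_def using PSG.distr_pair_swap[where 'n='n and 'm='m] by simp
  also have "\<dots> = integral\<^sup>L (PG :: ((real^'m) \<times> (real^'n)) measure) (\<lambda>z. ?f (case z of (x,y) \<Rightarrow> (y,x)))"
    by (rule integral_distr) measurable
  also have "\<dots> = Fz xb wb x w"
    unfolding Fz_def by (intro Bochner_Integration.integral_cong refl) (auto simp: inner_commute mult.commute)
  finally show ?thesis .
qed

lemma Fz_conv_w:
  fixes wb :: "real^'n" and xb :: "real^'m"
  assumes "0 \<le> t" "t \<le> 1"
  shows "Fz wb xb (w + t *\<^sub>R d) x \<le> (1 - t) * Fz wb xb w x + t * Fz wb xb (w + d) x"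
proof -
  have "Fz xb wb x (w + t *\<^sub>R d) \<le> (1 - t) * Fz xb wb x w + t * Fz xb wb x (w + d)"
    by (rule Fz_conv_x[OF assms])
  then show ?thesis by (simp only: Fz_swap[of wb xb])
qed

lemma PG_refl_a: "(PG :: ((real^'n) \<times> (real^'m)) measure) = distr PG PG (\<lambda>(x,y). (refl e x, y))"
proof -
  have d1: "distr std_gaussian std_gaussian (refl e) = (std_gaussian :: (real^'n) measure)"
    using distr_std_gaussian_refl[of e] by (metis distr_cong sets_std_gaussian)
  have d2: "distr std_gaussian std_gaussian (\<lambda>x. x) = (std_gaussian :: (real^'m) measure)"
    by (rule distr_id)
  have "distr std_gaussian std_gaussian (refl e) \<Otimes>\<^sub>M distr std_gaussian std_gaussian (\<lambda>x. x)
     = distr (PG :: ((real^'n) \<times> (real^'m)) measure) PG (\<lambda>(x, y). (refl e x, y))"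
    by (rule pair_measure_distr) (auto simp: d2 finite_measure_std_gaussian finite_measure.axioms(1))
  then show ?thesis by (simp add: d1 d2)
qed

lemma PG_refl_b: "(PG :: ((real^'n) \<times> (real^'m)) measure) = distr PG PG (\<lambda>(x,y). (x, refl e y))"
proof -
  have d1: "distr std_gaussian std_gaussian (refl e) = (std_gaussian :: (real^'m) measure)"
    using distr_std_gaussian_refl[of e] by (metis distr_cong sets_std_gaussian)
  have d2: "distr std_gaussian std_gaussian (\<lambda>x. x) = (std_gaussian :: (real^'n) measure)"
    by (rule distr_id)
  have "distr std_gaussian std_gaussian (\<lambda>x. x) \<Otimes>\<^sub>M distr std_gaussian std_gaussian (refl e)
     = distr (PG :: ((real^'n) \<times> (real^'m)) measure) PG (\<lambda>(x, y). (x, refl e y))"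
    by (rule pair_measure_distr) (auto simp: d1 finite_measure_std_gaussian finite_measure.axioms(1))
  then show ?thesis by (simp add: d1 d2)
qed

lemma int_refl_a:
  fixes f :: "(real^'n) \<times> (real^'m) \<Rightarrow> real"
  assumes "f \<in> borel_measurable (PG :: ((real^'n) \<times> (real^'m)) measure)"
  shows "integral\<^sup>L (PG :: ((real^'n) \<times> (real^'m)) measure) f = integral\<^sup>L PG (\<lambda>(a,b). f (refl e a, b))"
proof -
  have "integral\<^sup>L (PG :: ((real^'n) \<times> (real^'m)) measure) f = integral\<^sup>L (distr PG PG (\<lambda>(x,y). (refl e x, y))) f"
    by (rule arg_cong[where f="\<lambda>M. integral\<^sup>L M f"], rule PG_refl_a)
  also have "\<dots> = integral\<^sup>L PG (\<lambda>z. f (case z of (x,y) \<Rightarrow> (refl e x, y)))"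
    by (rule integral_distr) (use assms in measurable)
  finally show ?thesis by (simp add: case_prod_unfold)
qed

lemma int_refl_b:
  fixes f :: "(real^'n) \<times> (real^'m) \<Rightarrow> real"
  assumes "f \<in> borel_measurable (PG :: ((real^'n) \<times> (real^'m)) measure)"
  shows "integral\<^sup>L (PG :: ((real^'n) \<times> (real^'m)) measure) f = integral\<^sup>L PG (\<lambda>(a,b). f (a, refl e b))"
proof -
  have "integral\<^sup>L (PG :: ((real^'n) \<times> (real^'m)) measure) f = integral\<^sup>L (distr PG PG (\<lambda>(x,y). (x, refl e y))) f"
    by (rule arg_cong[where f="\<lambda>M. integral\<^sup>L M f"], rule PG_refl_b)
  also have "\<dots> = integral\<^sup>L PG (\<lambda>z. f (case z of (x,y) \<Rightarrow> (x, refl e y)))"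
    by (rule integral_distr) (use assms in measurable)
  finally show ?thesis by (simp add: case_prod_unfold)
qed




lemma SG_open_pos:
  assumes "open A" "a0 \<in> A"
  shows "emeasure (std_gaussian :: (real^'n) measure) A > 0"
proof (rule ccontr)
  assume "\<not> ?thesis"
  then have z: "emeasure (std_gaussian :: (real^'n) measure) A = 0" by simp
  have Ab: "A \<in> sets borel" using assms by simp
  have "A \<in> null_sets (density lborel (\<lambda>a::real^'n. ennreal (gd a)))"
    using z Ab by (simp add: null_sets_def std_gaussian_gd[symmetric])
  then have "AE x in lborel. x \<in> A \<longrightarrow> ennreal (gd (x::real^'n)) = 0"
    by (subst (asm) null_sets_density_iff) auto
  moreover have "\<And>x::real^'n. ennreal (gd x) \<noteq> 0" by (metis gd_pos ennreal_eq_0_iff not_le)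
  ultimately have "AE x in lborel. x \<notin> (A :: (real^'n) set)"
    by (metis (mono_tags, lifting) AE_mp AE_I2)
  then have lz: "emeasure lborel A = 0"
    using Ab by (subst (asm) AE_iff_measurable[of A]) auto
  obtain r where r: "r > 0" "ball a0 r \<subseteq> A" using assms open_contains_ball by blast
  have "emeasure lborel (ball a0 r) \<le> emeasure lborel A" by (rule emeasure_mono) (use r Ab in auto)
  moreover have "emeasure lborel (ball a0 r) = ennreal (Henstock_Kurzweil_Integration.content (ball a0 r))"
    using emeasure_lborel_ball_finite[of a0 r] by (simp add: emeasure_eq_ennreal_measure)
  moreover have "Henstock_Kurzweil_Integration.content (ball a0 r) > 0" by (rule content_ball_pos[OF r(1)])
  ultimately show False using lz by simp
qed

lemma PG_open_pos:
  assumes "open U" "z0 \<in> U"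
  shows "emeasure (PG :: ((real^'n) \<times> (real^'m)) measure) U > 0"
proof -
  obtain A B where AB: "open A" "open B" "z0 \<in> A \<times> B" "A \<times> B \<subseteq> U"
    using assms(1,2) by (rule open_prod_elim) blast
  have "emeasure (PG :: ((real^'n) \<times> (real^'m)) measure) (A \<times> B) = emeasure std_gaussian A * emeasure std_gaussian B"
    by (rule SG.emeasure_pair_measure_Times) (use AB in simp_all)
  moreover have "emeasure (std_gaussian :: (real^'n) measure) A > 0" using AB by (intro SG_open_pos[of A "fst z0"]) auto
  moreover have "emeasure (std_gaussian :: (real^'m) measure) B > 0" using AB by (intro SG_open_pos[of B "snd z0"]) auto
  ultimately have "emeasure (PG :: ((real^'n) \<times> (real^'m)) measure) (A \<times> B) > 0"
    by (metis not_gr_zero mult_eq_0_iff)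
  moreover have "emeasure (PG :: ((real^'n) \<times> (real^'m)) measure) (A \<times> B) \<le> emeasure PG U"
  proof (rule emeasure_mono)
    show "A \<times> B \<subseteq> U" by (rule AB(4))
    have "U \<in> sets borel" using assms by simp
    then show "U \<in> sets (PG :: ((real^'n) \<times> (real^'m)) measure)" by (simp only: sets_PG)
  qed
  ultimately show ?thesis by simp
qed

lemma integral_pos_cont:
  fixes h :: "(real^'n) \<times> (real^'m) \<Rightarrow> real"
  assumes cont: "continuous_on UNIV h" and nn: "\<And>z. h z \<ge> 0" and int: "integrable PG h"
    and pos: "h z0 > 0"
  shows "integral\<^sup>L (PG :: ((real^'n) \<times> (real^'m)) measure) h > 0"
proof -
  have "integral\<^sup>L PG h \<ge> 0" using nn by (simp add: Bochner_Integration.integral_nonneg)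
  moreover have "integral\<^sup>L PG h \<noteq> 0"
  proof
    assume "integral\<^sup>L PG h = 0"
    then have ae: "AE z in PG. h z = 0"
      using integral_nonneg_eq_0_iff_AE[OF int] nn by simp
    let ?U = "{z. 0 < h z}"
    have oU: "open ?U" using cont by (simp add: open_Collect_less continuous_on_const)
    have "?U \<in> sets borel" using oU by simp
    then have "?U \<in> sets (PG :: ((real^'n) \<times> (real^'m)) measure)" by (simp only: sets_PG)
    moreover have "{z \<in> space PG. \<not> h z = 0} = ?U" using nn by (auto simp: less_le)
    ultimately have "emeasure (PG :: ((real^'n) \<times> (real^'m)) measure) ?U = 0"
      using ae AE_iff_measurable[of ?U PG "\<lambda>z. h z = 0"] by simp
    moreover have "emeasure (PG :: ((real^'n) \<times> (real^'m)) measure) ?U > 0"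
      using oU pos by (intro PG_open_pos[of ?U z0]) auto
    ultimately show False by simp
  qed
  ultimately show ?thesis by simp
qed

lemma Fz_strict_x:
  fixes wb :: "real^'n" and xb :: "real^'m"
  assumes w0: "w \<noteq> 0" and xne: "x \<noteq> ((w \<bullet> wb) / (w \<bullet> w)) *\<^sub>R xb"
  shows "Fz wb xb w (((w \<bullet> wb) / (w \<bullet> w)) *\<^sub>R xb) < Fz wb xb w x"
proof -
  define \<rho> where "\<rho> = (w \<bullet> wb) / (w \<bullet> w)"
  define xs where "xs = \<rho> *\<^sub>R xb"
  define y where "y = x - xs"
  have y0: "y \<noteq> 0" using xne by (simp add: y_def xs_def \<rho>_def)
  have ww: "w \<bullet> w \<noteq> 0" using w0 by simp
  define p where "p = (\<lambda>z::(real^'n) \<times> (real^'m). (fst z \<bullet> w) * (xs \<bullet> snd z) - (fst z \<bullet> wb) * (xb \<bullet> snd z))"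
  define q where "q = (\<lambda>z::(real^'n) \<times> (real^'m). (fst z \<bullet> w) * (y \<bullet> snd z))"
  have ux: "(a \<bullet> w) * (x \<bullet> b) - (a \<bullet> wb) * (xb \<bullet> b) = p (a,b) + q (a,b)" for a b
    by (simp add: p_def q_def y_def inner_diff_left algebra_simps)
  have r1: "refl w a \<bullet> wb = a \<bullet> wb - 2 * \<rho> * (a \<bullet> w)" for a :: "real^'n"
  proof -
    have "refl w a \<bullet> wb = a \<bullet> wb - (2 * (a \<bullet> w) / (w \<bullet> w)) * (w \<bullet> wb)"
      by (simp add: refl_def inner_diff_left)
    also have "\<dots> = a \<bullet> wb - 2 * \<rho> * (a \<bullet> w)" using ww by (simp add: \<rho>_def field_simps)
    finally show ?thesis .
  qed
  have urefl: "p (refl w a, b) + q (refl w a, b) = p (a,b) - q (a,b)" for a b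
    by (simp add: p_def q_def r1 y_def xs_def inner_diff_left algebra_simps)
  define A where "A = (\<lambda>z. \<bar>p z + q z\<bar>)"
  define B where "B = (\<lambda>z. \<bar>p z - q z\<bar>)"
  define C where "C = (\<lambda>z. \<bar>p z\<bar>)"
  have pb: "\<bar>p (a,b)\<bar> \<le> (norm w * norm xs + norm wb * norm xb) * (norm a * norm b)" for a b
  proof -
    have "\<bar>p (a,b)\<bar> \<le> \<bar>(a \<bullet> w) * (xs \<bullet> b)\<bar> + \<bar>(a \<bullet> wb) * (xb \<bullet> b)\<bar>" by (simp add: p_def)
    also have "\<dots> \<le> (norm w * norm xs) * (norm a * norm b) + (norm wb * norm xb) * (norm a * norm b)"
      by (intro add_mono bil_bound)
    finally show ?thesis by (simp add: algebra_simps)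
  qed
  have qb: "\<bar>q (a,b)\<bar> \<le> (norm w * norm y) * (norm a * norm b)" for a b
    unfolding q_def using bil_bound by simp
  define K where "K = norm w * norm xs + norm wb * norm xb + norm w * norm y"
  have pqb: "\<bar>p (a,b)\<bar> + \<bar>q (a,b)\<bar> \<le> K * (norm a * norm b)" for a b
    using pb[of a b] qb[of a b] by (simp add: K_def algebra_simps)
  have mp: "p \<in> borel_measurable PG" "q \<in> borel_measurable PG" unfolding p_def q_def by measurable
  have iA: "integrable PG A"
    by (rule integrable_dom[where C=K]) (use mp pqb in \<open>auto simp: A_def intro: order_trans[OF abs_triangle_ineq]\<close>)
  have iB: "integrable PG B"
    by (rule integrable_dom[where C=K]) (use mp pqb in \<open>auto simp: B_def intro: order_trans[OF abs_triangle_ineq4]\<close>)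
  have iC: "integrable PG C"
    by (rule integrable_dom[where C=K]) (use mp pqb in \<open>auto simp: C_def intro: order_trans[OF _ pqb]\<close>)
  have FA: "Fz wb xb w x = integral\<^sup>L PG A"
    unfolding Fz_def A_def by (intro Bochner_Integration.integral_cong refl) (auto simp: ux)
  have FC: "Fz wb xb w xs = integral\<^sup>L PG C"
    unfolding Fz_def C_def p_def by (intro Bochner_Integration.integral_cong refl) auto
  have AB: "integral\<^sup>L PG A = integral\<^sup>L PG B"
  proof -
    have "integral\<^sup>L PG A = integral\<^sup>L PG (\<lambda>(a,b). A (refl w a, b))"
      by (rule int_refl_a) (use mp in \<open>simp add: A_def\<close>)
    also have "\<dots> = integral\<^sup>L PG B"
      by (intro Bochner_Integration.integral_cong refl) (auto simp: A_def B_def urefl)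
    finally show ?thesis .
  qed
  define h where "h = (\<lambda>z. A z + B z - 2 * C z)"
  have hpos: "integral\<^sup>L (PG :: ((real^'n) \<times> (real^'m)) measure) h > 0"
  proof (rule integral_pos_cont[of h "(w, y)"])
    show "continuous_on UNIV h"
      unfolding h_def A_def B_def C_def p_def q_def by (intro continuous_intros)
    show "0 \<le> h z" for z
      unfolding h_def A_def B_def C_def by arith
    show "integrable PG h"
      unfolding h_def using iA iB iC
      by (intro Bochner_Integration.integrable_diff Bochner_Integration.integrable_add Bochner_Integration.integrable_mult_right)
    have p0: "p (w, y) = 0" using ww by (simp add: p_def xs_def \<rho>_def)
    have q0: "q (w, y) > 0" using ww y0 by (simp add: q_def)
    show "0 < h (w, y)" using p0 q0 by (simp add: h_def A_def B_def C_def)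
  qed
  have "integral\<^sup>L PG h = integral\<^sup>L PG A + integral\<^sup>L PG B - 2 * integral\<^sup>L PG C"
    unfolding h_def using iA iB iC
    by (simp add: Bochner_Integration.integral_diff Bochner_Integration.integral_add
         Bochner_Integration.integrable_add Bochner_Integration.integrable_mult_right)
  then show ?thesis using hpos FA FC AB by (simp add: xs_def \<rho>_def)
qed

lemma int_odd_a:
  fixes g :: "(real^'n) \<times> (real^'m) \<Rightarrow> real"
  assumes "g \<in> borel_measurable PG" "\<And>a b. g (refl e a, b) = - g (a, b)"
  shows "integral\<^sup>L (PG :: ((real^'n) \<times> (real^'m)) measure) g = 0"
proof -
  have "integral\<^sup>L (PG :: ((real^'n) \<times> (real^'m)) measure) g = integral\<^sup>L PG (\<lambda>(a,b). g (refl e a, b))"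
    by (rule int_refl_a) (rule assms(1))
  also have "\<dots> = integral\<^sup>L PG (\<lambda>z. - g z)"
    by (intro Bochner_Integration.integral_cong refl) (auto simp: assms(2))
  also have "\<dots> = - integral\<^sup>L PG g" by simp
  finally show ?thesis by simp
qed

lemma int_odd_b:
  fixes g :: "(real^'n) \<times> (real^'m) \<Rightarrow> real"
  assumes "g \<in> borel_measurable PG" "\<And>a b. g (a, refl e b) = - g (a, b)"
  shows "integral\<^sup>L (PG :: ((real^'n) \<times> (real^'m)) measure) g = 0"
proof -
  have "integral\<^sup>L (PG :: ((real^'n) \<times> (real^'m)) measure) g = integral\<^sup>L PG (\<lambda>(a,b). g (a, refl e b))"
    by (rule int_refl_b) (rule assms(1))
  also have "\<dots> = integral\<^sup>L PG (\<lambda>z. - g z)"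
    by (intro Bochner_Integration.integral_cong refl) (auto simp: assms(2))
  also have "\<dots> = - integral\<^sup>L PG g" by simp
  finally show ?thesis by simp
qed

lemma sgn_lower: "\<bar>u - v\<bar> \<ge> \<bar>v\<bar> - sgn v * (u::real)"
  by (cases "v > 0"; cases "v < 0") (auto simp: sgn_real_def)

lemma Fz_lower:
  fixes wb :: "real^'n" and xb :: "real^'m"
  assumes wb0: "wb \<noteq> 0" and xb0: "xb \<noteq> 0" and ow: "w \<bullet> wb = 0" and ox: "x \<bullet> xb = 0"
    and wx: "w = 0 \<or> x = 0"
  shows "Fz wb xb w' x' \<ge> Fz wb xb w x - Fz wb xb w x * (norm (w' - w) * norm (x' - x)) / (norm wb * norm xb)"
proof -
  define v where "v = (\<lambda>z::(real^'n) \<times> (real^'m). (fst z \<bullet> wb) * (xb \<bullet> snd z))"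
  define t where "t = (w' \<bullet> wb) / (wb \<bullet> wb)"
  define \<sigma> where "\<sigma> = (x' \<bullet> xb) / (xb \<bullet> xb)"
  define wp where "wp = w' - t *\<^sub>R wb"
  define xp where "xp = x' - \<sigma> *\<^sub>R xb"
  have wbwb: "wb \<bullet> wb \<noteq> 0" "xb \<bullet> xb \<noteq> 0" using wb0 xb0 by auto
  have wpo: "wb \<bullet> wp = 0" using wbwb by (simp add: wp_def t_def inner_diff_right inner_commute)
  have xpo: "xb \<bullet> xp = 0" using wbwb by (simp add: xp_def \<sigma>_def inner_diff_right inner_commute)
  define u where "u = (\<lambda>z::(real^'n) \<times> (real^'m). (fst z \<bullet> w') * (x' \<bullet> snd z))"
  define k1 where "k1 = (\<lambda>z::(real^'n) \<times> (real^'m). sgn (v z) * ((fst z \<bullet> wb) * (xp \<bullet> snd z)))"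
  define k2 where "k2 = (\<lambda>z::(real^'n) \<times> (real^'m). sgn (v z) * ((fst z \<bullet> wp) * (x' \<bullet> snd z)))"
  have su: "sgn (v z) * u z = t * \<sigma> * \<bar>v z\<bar> + t * k1 z + k2 z" for z
  proof -
    have e1: "fst z \<bullet> w' = t * (fst z \<bullet> wb) + fst z \<bullet> wp" by (simp add: wp_def inner_diff_right)
    have e2: "x' \<bullet> snd z = \<sigma> * (xb \<bullet> snd z) + xp \<bullet> snd z" by (simp add: xp_def inner_diff_left)
    have "u z = t * \<sigma> * v z + t * ((fst z \<bullet> wb) * (xp \<bullet> snd z)) + (fst z \<bullet> wp) * (x' \<bullet> snd z)"
      unfolding u_def v_def e1 e2 by (simp add: algebra_simps)
    then show ?thesis
      by (simp add: k1_def k2_def algebra_simps abs_real_def sgn_real_def)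
  qed
  have mv: "v \<in> borel_measurable PG" unfolding v_def by measurable
  have mk1: "k1 \<in> borel_measurable PG" unfolding k1_def v_def by measurable
  have mk2: "k2 \<in> borel_measurable PG" unfolding k2_def v_def by measurable
  have sgn_le: "\<bar>sgn r\<bar> \<le> (1::real)" for r by (simp add: sgn_real_def)
  have bnd: "\<bar>sgn (v z) * ((fst z \<bullet> p) * (q \<bullet> snd z))\<bar> \<le> (norm p * norm q) * (norm (fst z) * norm (snd z))"
    for p :: "real^'n" and q :: "real^'m" and z
  proof -
    have "\<bar>sgn (v z) * ((fst z \<bullet> p) * (q \<bullet> snd z))\<bar> \<le> 1 * \<bar>(fst z \<bullet> p) * (q \<bullet> snd z)\<bar>"
      unfolding abs_mult[of "sgn (v z)"] by (intro mult_right_mono sgn_le) auto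
    also have "\<dots> \<le> (norm p * norm q) * (norm (fst z) * norm (snd z))" using bil_bound by simp
    finally show ?thesis .
  qed
  have ik1: "integrable PG k1"
    by (rule integrable_dom[where C="norm wb * norm xp"]) (use mk1 bnd in \<open>auto simp: k1_def\<close>)
  have ik2: "integrable PG k2"
    by (rule integrable_dom[where C="norm wp * norm x'"]) (use mk2 bnd in \<open>auto simp: k2_def\<close>)
  have iv: "integrable PG (\<lambda>z. \<bar>v z\<bar>)"
    by (rule integrable_dom[where C="norm wb * norm xb"]) (use mv bil_bound in \<open>auto simp: v_def\<close>)
  have k1z: "integral\<^sup>L PG k1 = 0"
  proof (rule int_odd_b[where e=xp])
    show "k1 \<in> borel_measurable PG" by (rule mk1)
    fix a b
    have "refl xp b \<bullet> xb = b \<bullet> xb" by (rule refl_inner_orth) (simp add: xpo)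
    moreover have "xp \<bullet> refl xp b = - (xp \<bullet> b)" using refl_inner_e[of xp b] by (simp add: inner_commute)
    ultimately show "k1 (a, refl xp b) = - k1 (a, b)" by (simp add: k1_def v_def inner_commute)
  qed
  have k2z: "integral\<^sup>L PG k2 = 0"
  proof (rule int_odd_a[where e=wp])
    show "k2 \<in> borel_measurable PG" by (rule mk2)
    fix a b
    have "refl wp a \<bullet> wb = a \<bullet> wb" by (rule refl_inner_orth) (simp add: wpo inner_commute)
    moreover have "refl wp a \<bullet> wp = - (a \<bullet> wp)" by (rule refl_inner_e)
    ultimately show "k2 (refl wp a, b) = - k2 (a, b)" by (simp add: k2_def v_def)
  qed
  define V where "V = integral\<^sup>L PG (\<lambda>z. \<bar>v z\<bar>)"
  have FV: "Fz wb xb w x = V"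
    unfolding Fz_def V_def v_def using wx by (intro Bochner_Integration.integral_cong refl) (auto simp: inner_commute)
  have Vnn: "V \<ge> 0" unfolding V_def by (simp add: Bochner_Integration.integral_nonneg)
  have isu: "integrable PG (\<lambda>z. sgn (v z) * u z)"
    unfolding su using iv ik1 ik2
    by (intro Bochner_Integration.integrable_add Bochner_Integration.integrable_mult_right)
  have Isu: "integral\<^sup>L PG (\<lambda>z. sgn (v z) * u z) = t * \<sigma> * V"
    unfolding su using iv ik1 ik2 k1z k2z
    by (simp add: V_def Bochner_Integration.integral_add Bochner_Integration.integrable_add)
  have "Fz wb xb w' x' = integral\<^sup>L PG (\<lambda>z. \<bar>u z - v z\<bar>)"
    unfolding Fz_def u_def v_def by (intro Bochner_Integration.integral_cong refl) (auto simp: inner_commute)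
  also have "\<dots> \<ge> integral\<^sup>L PG (\<lambda>z. \<bar>v z\<bar> - sgn (v z) * u z)"
  proof (rule Bochner_Integration.integral_mono)
    show "integrable PG (\<lambda>z. \<bar>v z\<bar> - sgn (v z) * u z)" using iv isu by (rule Bochner_Integration.integrable_diff)
    show "integrable PG (\<lambda>z. \<bar>u z - v z\<bar>)"
    proof (rule integrable_dom[where C="norm w' * norm x' + norm wb * norm xb"])
      show "(\<lambda>z. \<bar>u z - v z\<bar>) \<in> borel_measurable PG" unfolding u_def v_def by measurable
      fix a b
      have "\<bar>u (a,b) - v (a,b)\<bar> \<le> \<bar>u (a,b)\<bar> + \<bar>v (a,b)\<bar>" by (rule abs_triangle_ineq4)
      also have "\<dots> \<le> (norm w' * norm x') * (norm a * norm b) + (norm wb * norm xb) * (norm a * norm b)"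
        unfolding u_def v_def using bil_bound by (intro add_mono) simp_all
      finally show "\<bar>\<bar>u (a,b) - v (a,b)\<bar>\<bar> \<le> (norm w' * norm x' + norm wb * norm xb) * (norm a * norm b)"
        by (simp add: algebra_simps)
    qed
  qed (rule sgn_lower)
  finally have "Fz wb xb w' x' \<ge> V - t * \<sigma> * V"
    using iv isu Isu by (simp add: V_def Bochner_Integration.integral_diff)
  moreover have "\<bar>t * \<sigma>\<bar> \<le> (norm (w' - w) * norm (x' - x)) / (norm wb * norm xb)"
  proof -
    have "w' \<bullet> wb = (w' - w) \<bullet> wb" using ow by (simp add: inner_diff_left)
    then have a1: "\<bar>w' \<bullet> wb\<bar> \<le> norm (w' - w) * norm wb" using Cauchy_Schwarz_ineq2 by metis
    have "x' \<bullet> xb = (x' - x) \<bullet> xb" using ox by (simp add: inner_diff_left)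
    then have a2: "\<bar>x' \<bullet> xb\<bar> \<le> norm (x' - x) * norm xb" using Cauchy_Schwarz_ineq2 by metis
    have nw: "wb \<bullet> wb = norm wb * norm wb" "xb \<bullet> xb = norm xb * norm xb"
      by (simp_all add: power2_norm_eq_inner[symmetric] power2_eq_square)
    have pw: "norm wb > 0" "norm xb > 0" using wb0 xb0 by auto
    have "\<bar>t\<bar> \<le> norm (w' - w) / norm wb"
      using a1 pw unfolding t_def nw by (simp add: abs_div field_simps)
    moreover have "\<bar>\<sigma>\<bar> \<le> norm (x' - x) / norm xb"
      using a2 pw unfolding \<sigma>_def nw by (simp add: abs_div field_simps)
    ultimately have "\<bar>t\<bar> * \<bar>\<sigma>\<bar> \<le> (norm (w' - w) / norm wb) * (norm (x' - x) / norm xb)"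
      by (intro mult_mono) auto
    then show ?thesis by (simp add: abs_mult)
  qed
  ultimately show ?thesis
  proof -
    assume h1: "Fz wb xb w' x' \<ge> V - t * \<sigma> * V"
      and h2: "\<bar>t * \<sigma>\<bar> \<le> (norm (w' - w) * norm (x' - x)) / (norm wb * norm xb)"
    have "t * \<sigma> * V \<le> \<bar>t * \<sigma>\<bar> * V" using Vnn by (intro mult_right_mono) auto
    also have "\<dots> \<le> ((norm (w' - w) * norm (x' - x)) / (norm wb * norm xb)) * V"
      using h2 Vnn by (intro mult_right_mono) auto
    finally show ?thesis using h1 FV by (simp add: algebra_simps)
  qed
qed

lemma not_crit:
  fixes h :: "'a::real_inner \<Rightarrow> real"
  assumes c1: "isCont h z" and c2: "isCont h (z + d)"
    and conv: "\<And>z' t. 0 \<le> t \<Longrightarrow> t \<le> 1 \<Longrightarrow> h (z' + t *\<^sub>R d) \<le> (1 - t) * h z' + t * h (z' + d)"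
    and strict: "h (z + d) < h z"
  shows "0 \<notin> limiting_subdiff h z"
proof
  assume "0 \<in> limiting_subdiff h z"
  then obtain zs \<xi>s where zs: "zs \<longlonglongrightarrow> z" and xs: "\<xi>s \<longlonglongrightarrow> 0"
    and fr: "\<And>n. frechet_subgrad h (zs n) (\<xi>s n)"
    unfolding limiting_subdiff_def by blast
  define \<delta> where "\<delta> = h z - h (z + d)"
  have \<delta>: "\<delta> > 0" using strict by (simp add: \<delta>_def)
  have d0: "d \<noteq> 0" using strict by auto
  have nd: "norm d > 0" using d0 by simp
  have t1: "(\<lambda>n. h (zs n)) \<longlonglongrightarrow> h z" using c1 zs by (rule isCont_tendsto_compose)
  have "(\<lambda>n. zs n + d) \<longlonglongrightarrow> z + d" using zs by (intro tendsto_intros)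
  then have t2: "(\<lambda>n. h (zs n + d)) \<longlonglongrightarrow> h (z + d)" using c2 by (intro isCont_tendsto_compose[OF c2])
  have "(\<lambda>n. h (zs n) - h (zs n + d)) \<longlonglongrightarrow> \<delta>" unfolding \<delta>_def using t1 t2 by (rule tendsto_diff)
  then have ev1: "eventually (\<lambda>n. h (zs n) - h (zs n + d) > \<delta>/2) sequentially"
    using \<delta> by (intro order_tendstoD) auto
  have "(\<lambda>n. norm (\<xi>s n)) \<longlonglongrightarrow> 0" using xs tendsto_norm_zero by blast
  then have ev2: "eventually (\<lambda>n. norm (\<xi>s n) < \<delta> / (4 * norm d)) sequentially"
    using \<delta> nd by (intro order_tendstoD) auto
  from eventually_conj[OF ev1 ev2] obtain n where n1: "h (zs n) - h (zs n + d) > \<delta>/2"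
    and n2: "norm (\<xi>s n) < \<delta> / (4 * norm d)"
    by (metis (mono_tags, lifting) eventually_sequentially order_refl)
  define \<epsilon> where "\<epsilon> = \<delta> / (4 * norm d)"
  have \<epsilon>: "\<epsilon> > 0" using \<delta> nd by (simp add: \<epsilon>_def)
  from fr[of n] \<epsilon> have "eventually (\<lambda>y. h y \<ge> h (zs n) + \<xi>s n \<bullet> (y - zs n) - \<epsilon> * norm (y - zs n)) (at (zs n))"
    unfolding frechet_subgrad_def by blast
  then obtain r where r: "r > 0"
    and rr: "\<And>y. y \<noteq> zs n \<Longrightarrow> dist y (zs n) < r \<Longrightarrow> h y \<ge> h (zs n) + \<xi>s n \<bullet> (y - zs n) - \<epsilon> * norm (y - zs n)"
    unfolding eventually_at by auto
  define t where "t = min 1 (r / (2 * norm d))"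
  have t0: "0 < t" "t \<le> 1" using r nd by (auto simp: t_def)
  have "t * norm d \<le> (r / (2 * norm d)) * norm d" using nd by (intro mult_right_mono) (auto simp: t_def)
  also have "\<dots> < r" using nd r by (simp add: field_simps)
  finally have tr: "t * norm d < r" .
  let ?y = "zs n + t *\<^sub>R d"
  have yne: "?y \<noteq> zs n" using t0 d0 by simp
  have ydist: "dist ?y (zs n) < r" using tr t0 by (simp add: dist_norm)
  have A: "h ?y \<ge> h (zs n) + \<xi>s n \<bullet> (t *\<^sub>R d) - \<epsilon> * (t * norm d)"
    using rr[OF yne ydist] t0 by simp
  have B: "h ?y \<le> (1 - t) * h (zs n) + t * h (zs n + d)" using conv t0 by simp
  have C: "\<xi>s n \<bullet> (t *\<^sub>R d) \<ge> - (t * (norm (\<xi>s n) * norm d))"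
  proof -
    have "\<bar>\<xi>s n \<bullet> d\<bar> \<le> norm (\<xi>s n) * norm d" by (rule Cauchy_Schwarz_ineq2)
    then have "\<xi>s n \<bullet> d \<ge> - (norm (\<xi>s n) * norm d)" by simp
    then have "t * (\<xi>s n \<bullet> d) \<ge> t * (- (norm (\<xi>s n) * norm d))" using t0 by (intro mult_left_mono) auto
    then show ?thesis by simp
  qed
  have "t * (h (zs n) - h (zs n + d)) \<le> t * (norm (\<xi>s n) * norm d + \<epsilon> * norm d)"
    using A B C by (simp add: algebra_simps)
  then have D: "h (zs n) - h (zs n + d) \<le> norm (\<xi>s n) * norm d + \<epsilon> * norm d"
    using t0 by (simp add: mult_le_cancel_left_pos)
  have "norm (\<xi>s n) * norm d < \<delta> / 4" using n2 nd by (simp add: field_simps)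
  moreover have "\<epsilon> * norm d = \<delta> / 4" using nd by (simp add: \<epsilon>_def)
  ultimately show False using D n1 by simp
qed

lemma crit_of_frechet: "frechet_subgrad h z 0 \<Longrightarrow> 0 \<in> limiting_subdiff h z"
  unfolding limiting_subdiff_def
  by (rule CollectI, rule exI[of _ "\<lambda>n. z"], rule exI[of _ "\<lambda>n. 0"]) auto

lemma crit_x:
  fixes wb :: "real^'n" and xb :: "real^'m"
  assumes "w \<noteq> 0" "x \<noteq> ((w \<bullet> wb) / (w \<bullet> w)) *\<^sub>R xb"
  shows "0 \<notin> limiting_subdiff (fP wb xb) (w, x)"
proof (rule not_crit[where d="(0, ((w \<bullet> wb) / (w \<bullet> w)) *\<^sub>R xb - x)"])
  show "isCont (fP wb xb) (w, x)" by (rule isCont_fP)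
  show "isCont (fP wb xb) ((w, x) + (0, ((w \<bullet> wb) / (w \<bullet> w)) *\<^sub>R xb - x))" by (rule isCont_fP)
  fix z' :: "(real^'n) \<times> (real^'m)" and t :: real
  assume "0 \<le> t" "t \<le> 1"
  then show "fP wb xb (z' + t *\<^sub>R (0, ((w \<bullet> wb) / (w \<bullet> w)) *\<^sub>R xb - x))
    \<le> (1 - t) * fP wb xb z' + t * fP wb xb (z' + (0, ((w \<bullet> wb) / (w \<bullet> w)) *\<^sub>R xb - x))"
    using Fz_conv_x by (cases z') (simp add: fP_Fz)
next
  show "fP wb xb ((w, x) + (0, ((w \<bullet> wb) / (w \<bullet> w)) *\<^sub>R xb - x)) < fP wb xb (w, x)"
    using Fz_strict_x[OF assms] by (simp add: fP_Fz)
qed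

lemma crit_w:
  fixes wb :: "real^'n" and xb :: "real^'m"
  assumes "x \<noteq> 0" "w \<noteq> ((x \<bullet> xb) / (x \<bullet> x)) *\<^sub>R wb"
  shows "0 \<notin> limiting_subdiff (fP wb xb) (w, x)"
proof (rule not_crit[where d="(((x \<bullet> xb) / (x \<bullet> x)) *\<^sub>R wb - w, 0)"])
  show "isCont (fP wb xb) (w, x)" by (rule isCont_fP)
  show "isCont (fP wb xb) ((w, x) + (((x \<bullet> xb) / (x \<bullet> x)) *\<^sub>R wb - w, 0))" by (rule isCont_fP)
  fix z' :: "(real^'n) \<times> (real^'m)" and t :: real
  assume "0 \<le> t" "t \<le> 1"
  then show "fP wb xb (z' + t *\<^sub>R (((x \<bullet> xb) / (x \<bullet> x)) *\<^sub>R wb - w, 0))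
    \<le> (1 - t) * fP wb xb z' + t * fP wb xb (z' + (((x \<bullet> xb) / (x \<bullet> x)) *\<^sub>R wb - w, 0))"
    using Fz_conv_w by (cases z') (simp add: fP_Fz)
next
  have "Fz xb wb x (((x \<bullet> xb) / (x \<bullet> x)) *\<^sub>R wb) < Fz xb wb x w"
    using Fz_strict_x[OF assms] .
  then show "fP wb xb ((w, x) + (((x \<bullet> xb) / (x \<bullet> x)) *\<^sub>R wb - w, 0)) < fP wb xb (w, x)"
    by (simp add: fP_Fz Fz_swap[of wb xb])
qed

lemma frechet_S:
  fixes wb :: "real^'n" and xb :: "real^'m"
  assumes "\<alpha> \<noteq> 0"
  shows "frechet_subgrad (fP wb xb) (\<alpha> *\<^sub>R wb, (1 / \<alpha>) *\<^sub>R xb) 0"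
proof -
  have z: "fP wb xb (\<alpha> *\<^sub>R wb, (1 / \<alpha>) *\<^sub>R xb) = 0"
    unfolding fP_Fz Fz_def using assms by (simp add: case_prod_unfold)
  have nn: "fP wb xb y \<ge> 0" for y by (simp add: fP_Fz Fz_nonneg)
  show ?thesis unfolding frechet_subgrad_def z
  proof (intro allI impI always_eventually)
    fix \<epsilon> :: real and y :: "(real^'n) \<times> (real^'m)"
    assume "\<epsilon> > 0"
    then have "\<epsilon> * norm (y - (\<alpha> *\<^sub>R wb, (1 / \<alpha>) *\<^sub>R xb)) \<ge> 0" by simp
    then show "0 + 0 \<bullet> (y - (\<alpha> *\<^sub>R wb, (1 / \<alpha>) *\<^sub>R xb)) - \<epsilon> * norm (y - (\<alpha> *\<^sub>R wb, (1 / \<alpha>) *\<^sub>R xb)) \<le> fP wb xb y"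
      using nn[of y] by simp
  qed
qed

lemma frechet_third:
  fixes wb :: "real^'n" and xb :: "real^'m"
  assumes wb0: "wb \<noteq> 0" and xb0: "xb \<noteq> 0" and ow: "w \<bullet> wb = 0" and ox: "x \<bullet> xb = 0"
    and wx: "w = 0 \<or> x = 0"
  shows "frechet_subgrad (fP wb xb) (w, x) 0"
  unfolding frechet_subgrad_def
proof (intro allI impI)
  fix \<epsilon> :: real assume \<epsilon>: "\<epsilon> > 0"
  define V where "V = Fz wb xb w x"
  define M where "M = V / (norm wb * norm xb)"
  have V0: "V \<ge> 0" unfolding V_def by (rule Fz_nonneg)
  have M0: "M \<ge> 0" unfolding M_def using V0 by simp
  show "\<forall>\<^sub>F y in at (w, x). fP wb xb (w, x) + 0 \<bullet> (y - (w, x)) - \<epsilon> * norm (y - (w, x)) \<le> fP wb xb y"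
    unfolding eventually_at
  proof (intro exI[of _ "\<epsilon> / (M + 1)"] conjI ballI impI)
    show "\<epsilon> / (M + 1) > 0" using \<epsilon> M0 by simp
    fix y :: "(real^'n) \<times> (real^'m)"
    assume "y \<in> UNIV" and "y \<noteq> (w, x) \<and> dist y (w, x) < \<epsilon> / (M + 1)"
    then have dy: "norm (y - (w, x)) < \<epsilon> / (M + 1)" by (simp add: dist_norm)
    obtain w' x' where y: "y = (w', x')" by (cases y)
    have n1: "norm (w' - w) \<le> norm (y - (w, x))" using norm_fst_le[of "w' - w" "x' - x"] y by simp
    have n2: "norm (x' - x) \<le> norm (y - (w, x))" using norm_snd_le[of "x' - x" "w' - w"] y by simp
    have low: "Fz wb xb w' x' \<ge> V - M * (norm (w' - w) * norm (x' - x))"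
      using Fz_lower[OF wb0 xb0 ow ox wx, of w' x'] by (simp add: V_def M_def)
    define N where "N = norm (y - (w, x))"
    have N0: "N \<ge> 0" by (simp add: N_def)
    have s1: "norm (w' - w) * norm (x' - x) \<le> N * N"
      using n1 n2 unfolding N_def by (intro mult_mono) auto
    have s2: "N * N \<le> (\<epsilon> / (M + 1)) * N"
      using dy N0 unfolding N_def by (intro mult_right_mono) auto
    have s3: "M * (\<epsilon> / (M + 1)) \<le> \<epsilon>" using M0 \<epsilon> by (simp add: field_simps)
    have "M * (norm (w' - w) * norm (x' - x)) \<le> M * (N * N)" using s1 M0 by (rule mult_left_mono)
    also have "\<dots> \<le> M * ((\<epsilon> / (M + 1)) * N)" using s2 M0 by (rule mult_left_mono)
    also have "\<dots> = (M * (\<epsilon> / (M + 1))) * N" by (simp only: mult.assoc)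
    also have "\<dots> \<le> \<epsilon> * N" using s3 N0 by (rule mult_right_mono)
    finally have "M * (norm (w' - w) * norm (x' - x)) \<le> \<epsilon> * norm (y - (w, x))" by (simp add: N_def)
    then show "fP wb xb (w, x) + 0 \<bullet> (y - (w, x)) - \<epsilon> * norm (y - (w, x)) \<le> fP wb xb y"
      using low y by (simp add: fP_Fz V_def)
  qed
qed

lemma outer_zero: "outer w x = 0 \<Longrightarrow> w = 0 \<or> x = 0"
proof (rule ccontr)
  assume o: "outer w x = 0" and "\<not> (w = 0 \<or> x = 0)"
  then obtain i j where "w $ i \<noteq> 0" "x $ j \<noteq> 0" by (metis vec_eq_iff zero_index)
  then have "outer w x $ i $ j \<noteq> 0" by (simp add: outer_def)
  then show False using o by simp
qed

theorem theorem3p4: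
  fixes wbar :: "real ^ 'n" and xbar :: "real ^ 'm"
  assumes "wbar \<noteq> 0" and "xbar \<noteq> 0"
  shows "{z. 0 \<in> limiting_subdiff (fP wbar xbar) z} =
     {(\<alpha> *\<^sub>R wbar, (1 / \<alpha>) *\<^sub>R xbar) | \<alpha>. \<alpha> \<noteq> 0}
     \<union> {0}
     \<union> {(w, x). w \<bullet> wbar = 0 \<and> x \<bullet> xbar = 0 \<and> outer w x = 0}"
  (is "?L = ?R")
proof (rule set_eqI, rule iffI)
  fix z assume "z \<in> ?L"
  then have crit: "0 \<in> limiting_subdiff (fP wbar xbar) z" by simp
  obtain w x where z: "z = (w, x)" by (cases z)
  show "z \<in> ?R"
  proof (rule ccontr)
    assume nz: "z \<notin> ?R"
    have n1: "\<And>\<alpha>. \<alpha> \<noteq> 0 \<Longrightarrow> (w, x) \<noteq> (\<alpha> *\<^sub>R wbar, (1 / \<alpha>) *\<^sub>R xbar)" using nz z by blast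
    have n2: "(w, x) \<noteq> 0" using nz z by blast
    have n3: "\<not> (w \<bullet> wbar = 0 \<and> x \<bullet> xbar = 0 \<and> outer w x = 0)" using nz z by blast
    have o0: "outer w 0 = 0" "outer 0 x = 0" by (simp_all add: outer_def vec_eq_iff)
    show False
    proof (cases "w = 0")
      case True
      then have x0: "x \<noteq> 0" using n2 by (simp add: zero_prod_def)
      have "x \<bullet> xbar \<noteq> 0"
      proof
        assume "x \<bullet> xbar = 0"
        moreover have "w \<bullet> wbar = 0" using True by simp
        moreover have "outer w x = 0" using True o0(2) by simp
        ultimately show False using n3 by blast
      qed
      then have wne: "w \<noteq> ((x \<bullet> xbar) / (x \<bullet> x)) *\<^sub>R wbar" using True assms(1) x0 by simp
      show False using crit_w[OF x0 wne] crit z by simp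
    next
      case w0: False
      define \<rho> where "\<rho> = (w \<bullet> wbar) / (w \<bullet> w)"
      have ww: "w \<bullet> w \<noteq> 0" using w0 by simp
      show False
      proof (cases "x = \<rho> *\<^sub>R xbar")
        case False
        then have xne: "x \<noteq> ((w \<bullet> wbar) / (w \<bullet> w)) *\<^sub>R xbar" by (simp add: \<rho>_def)
        show False using crit_x[OF w0 xne] crit z by simp
      next
        case xe: True
        have \<rho>0: "\<rho> \<noteq> 0"
        proof
          assume "\<rho> = 0"
          then have "x = 0" "w \<bullet> wbar = 0" using xe ww by (simp_all add: \<rho>_def)
          moreover have "outer w (0::real^'m) = 0" by (simp add: outer_def vec_eq_iff)
          ultimately show False using n3 by simp
        qed
        have x0: "x \<noteq> 0" using xe \<rho>0 assms(2) by simp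
        have xbxb: "xbar \<bullet> xbar \<noteq> 0" using assms(2) by simp
        have ws: "((x \<bullet> xbar) / (x \<bullet> x)) *\<^sub>R wbar = (1 / \<rho>) *\<^sub>R wbar"
          using xe \<rho>0 xbxb by (simp add: power2_eq_square field_simps)
        show False
        proof (cases "w = (1 / \<rho>) *\<^sub>R wbar")
          case True
          have "(w, x) = ((1 / \<rho>) *\<^sub>R wbar, (1 / (1 / \<rho>)) *\<^sub>R xbar)" using True xe by simp
          then show False using n1[of "1 / \<rho>"] \<rho>0 by simp
        next
          case False
          then have wne: "w \<noteq> ((x \<bullet> xbar) / (x \<bullet> x)) *\<^sub>R wbar" unfolding ws .
          show False using crit_w[OF x0 wne] crit z by simp
        qed
      qed
    qed
  qed
next
  fix z assume "z \<in> ?R"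
  then consider (S) \<alpha> where "\<alpha> \<noteq> 0" "z = (\<alpha> *\<^sub>R wbar, (1 / \<alpha>) *\<^sub>R xbar)"
    | (Z) "z = 0"
    | (T) w x where "z = (w, x)" "w \<bullet> wbar = 0" "x \<bullet> xbar = 0" "outer w x = 0"
    by blast
  then show "z \<in> ?L"
  proof cases
    case S
    then show ?thesis using frechet_S[OF S(1), of wbar xbar] by (simp add: crit_of_frechet)
  next
    case Z
    have fr: "frechet_subgrad (fP wbar xbar) (0, 0) 0"
      by (rule frechet_third[OF assms]) simp_all
    have "0 \<in> limiting_subdiff (fP wbar xbar) (0, 0)" by (rule crit_of_frechet[OF fr])
    moreover have "z = (0, 0)" using Z by (simp add: zero_prod_def)
    ultimately show ?thesis by simp
  next
    case T
    have "frechet_subgrad (fP wbar xbar) (w, x) 0"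
      by (rule frechet_third[OF assms T(2) T(3) outer_zero[OF T(4)]])
    then show ?thesis using T by (simp add: crit_of_frechet)
  qed
qed


end
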